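(* Let $0<\theta_1<\dots<\theta_n<2\pi$ and set $\theta_{j+n}=\theta_j+2\pi$. For $A\subset\mathbb{R}$ write $A\ (\mathrm{mod}\ 2\pi)=\{x+2\pi m: x\in A, m\in\mathbb{Z}\}\cap[0,2\pi)$; for $a\in(0,2\pi)$ put $I(x,a)=[x,x+a]\ (\mathrm{mod}\ 2\pi)$ and, for $1\le j\le n$, $J_j(a)=\{x\in[0,2\pi): I(x,a)\subset(\theta_j,\theta_{j+1})\ (\mathrm{mod}\ 2\pi)\}$. For $a_1,\dots,a_k\in(0,2\pi)$ let $$\Sigma_k(a_1,\dots,a_k)=\bigcup_{i_1,\dots,i_k\in\{1,\dots,n\}\text{ all distinct}}\ \prod_{j=1}^kJ_{i_j}(a_j)\subset[0,2\pi)^k.$$ Then for $(y_1,\dots,y_k)\in[0,2\pi)^k$, $(y_1,\dots,y_k)\in\Sigma_k(a_1,\dots,a_k)$ holds if and only if all of the following hold: (i) $I(y_l,a_l)\cap I(y_j,a_j)=\emptyset$ for $1\le l<j\le k$; (ii) $\theta_l\notin I(y_j,a_j)$ for all $1\le j\le k$, $1\le l\le n$; (iii) for all $p,q\in\{1,\dots,k\}$ with $y_p<y_q$, $\{\theta_1,\dots,\theta_n\}\cap(y_p,y_q)\ne\emptyset$ and $\{\theta_1,\dots,\theta_n\}\setminus[y_p,y_q]\neq\emptyset$. *)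

theory Defs
  imports Complex_Main "HOL-Library.FuncSet"
begin

text \<open>Angles theta_1 < ... < theta_n are given as a function theta on indices 1..n;
  theta_{j+n} = theta_j + 2 pi (only needed for j = n+1 here).\<close>
definition theta_ext :: "(nat \<Rightarrow> real) \<Rightarrow> nat \<Rightarrow> nat \<Rightarrow> real" where
  "theta_ext \<theta> n j = (if j \<le> n then \<theta> j else \<theta> (j - n) + 2 * pi)"

definition mod2pi :: "real set \<Rightarrow> real set" where
  "mod2pi A = {x + 2 * pi * of_int m | x m. x \<in> A} \<inter> {0..<2 * pi}"

definition Iarc :: "real \<Rightarrow> real \<Rightarrow> real set" where
  "Iarc x a = mod2pi {x..x + a}"

definition Jset :: "(nat \<Rightarrow> real) \<Rightarrow> nat \<Rightarrow> nat \<Rightarrow> real \<Rightarrow> real set" where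
  "Jset \<theta> n j a = {x \<in> {0..<2 * pi}.
      Iarc x a \<subseteq> mod2pi {theta_ext \<theta> n j <..< theta_ext \<theta> n (Suc j)}}"

text \<open>k-tuples are represented as functions nat => real, using the indices 1..k.\<close>
definition Sigma_k :: "(nat \<Rightarrow> real) \<Rightarrow> nat \<Rightarrow> nat \<Rightarrow> (nat \<Rightarrow> real) \<Rightarrow> (nat \<Rightarrow> real) set" where
  "Sigma_k \<theta> n k a = (\<Union>i \<in> {i. inj_on i {1..k} \<and> i ` {1..k} \<subseteq> {1..n}}.
      Pi {1..k} (\<lambda>j. Jset \<theta> n (i j) (a j)))"

end

theory Submission
  imports Defs
begin

lemma mod2pi_mem:
  assumes "A \<subseteq> {0..<4*pi}"
  shows "t \<in> mod2pi A \<longleftrightarrow> 0 \<le> t \<and> t < 2*pi \<and> (t \<in> A \<or> t + 2*pi \<in> A)"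
proof
  assume h: "t \<in> mod2pi A"
  then obtain x m where x: "x \<in> A" "t = x + 2*pi*of_int m" and t: "0 \<le> t" "t < 2*pi"
    unfolding mod2pi_def by auto
  have x0: "0 \<le> x" "x < 4*pi" using x(1) assms by auto
  have "m = 0 \<or> m = -1"
  proof (rule ccontr)
    assume "\<not> (m = 0 \<or> m = -1)"
    then have "m \<ge> 1 \<or> m \<le> -2" by linarith
    then show False
    proof
      assume "m \<ge> 1"
      then have "real_of_int m \<ge> 1" by simp
      then have "2*pi*of_int m \<ge> 2*pi" using pi_gt_zero by simp
      then show False using x0 t x(2) by linarith
    next
      assume "m \<le> -2"
      then have "real_of_int m \<le> -2" by simp
      then have "pi*of_int m \<le> pi * (-2)" using pi_gt_zero by (intro mult_left_mono) auto
      then have "2*pi*of_int m \<le> -4*pi" by simp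
      then show False using x0 t x(2) by linarith
    qed
  qed
  then show "0 \<le> t \<and> t < 2*pi \<and> (t \<in> A \<or> t + 2*pi \<in> A)"
    using x t by auto
next
  assume h: "0 \<le> t \<and> t < 2*pi \<and> (t \<in> A \<or> t + 2*pi \<in> A)"
  then show "t \<in> mod2pi A"
  proof (cases "t \<in> A")
    case True
    have "t \<in> {x + 2 * pi * of_int m |x m. x \<in> A}"
    proof (rule CollectI, intro exI conjI)
      show "t = t + 2*pi*of_int (0::int)" by simp
    qed (rule True)
    then show ?thesis unfolding mod2pi_def using h by (intro IntI) auto
  next
    case False
    then have "t + 2*pi \<in> A" using h by auto
    moreover have "t = (t + 2*pi) + 2*pi*of_int (-1::int)" by simp
    ultimately have "t \<in> {x + 2 * pi * of_int m |x m. x \<in> A}" by blast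
    then show ?thesis unfolding mod2pi_def using h by (intro IntI) auto
  qed
qed

lemma Iarc_mem:
  assumes "0 \<le> y" "y < 2*pi" "0 < a" "a < 2*pi"
  shows "t \<in> Iarc y a \<longleftrightarrow> 0 \<le> t \<and> t < 2*pi \<and> ((y \<le> t \<and> t \<le> y + a) \<or> (y \<le> t + 2*pi \<and> t + 2*pi \<le> y + a))"
  unfolding Iarc_def using assms by (subst mod2pi_mem) auto

locale arcs =
  fixes \<theta> :: "nat \<Rightarrow> real" and n :: nat
  assumes n1: "n \<ge> 1" and sm: "strict_mono_on {1..n} \<theta>"
    and t1: "0 < \<theta> 1" and tn: "\<theta> n < 2 * pi"
begin

lemma mono_lt:
  assumes "l \<in> {1..n}" "m \<in> {1..n}"
  shows "\<theta> l < \<theta> m \<longleftrightarrow> l < m"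
proof
  assume "\<theta> l < \<theta> m"
  show "l < m"
  proof (rule ccontr)
    assume "\<not> l < m"
    then have "m < l \<or> m = l" by auto
    then show False
      using strict_mono_onD[OF sm assms(2) assms(1)] \<open>\<theta> l < \<theta> m\<close> by auto
  qed
next
  assume "l < m" then show "\<theta> l < \<theta> m" using strict_mono_onD[OF sm assms] by auto
qed

lemma mono_le:
  assumes "l \<in> {1..n}" "m \<in> {1..n}"
  shows "\<theta> l \<le> \<theta> m \<longleftrightarrow> l \<le> m"
  using mono_lt[OF assms(2) assms(1)] by auto

lemma bnds:
  assumes "l \<in> {1..n}"
  shows "\<theta> 1 \<le> \<theta> l" "\<theta> l \<le> \<theta> n" "0 < \<theta> l" "\<theta> l < 2*pi"
proof -
  have 1: "(1::nat) \<in> {1..n}" "n \<in> {1..n}" using n1 by auto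
  show a: "\<theta> 1 \<le> \<theta> l" using mono_le[OF 1(1) assms] assms by auto
  show b: "\<theta> l \<le> \<theta> n" using mono_le[OF assms 1(2)] assms by auto
  show "0 < \<theta> l" using a t1 by linarith
  show "\<theta> l < 2*pi" using b tn by linarith
qed

definition pg :: "nat \<Rightarrow> real \<Rightarrow> bool" where
  "pg i t = (if i < n then \<theta> i < t \<and> t < \<theta> (Suc i) else (\<theta> n < t \<or> t < \<theta> 1))"

lemma G_mem:
  assumes "i \<in> {1..n}"
  shows "t \<in> mod2pi {theta_ext \<theta> n i <..< theta_ext \<theta> n (Suc i)} \<longleftrightarrow>
         0 \<le> t \<and> t < 2*pi \<and> pg i t"
proof (cases "i < n")
  case True
  then have e: "theta_ext \<theta> n i = \<theta> i" "theta_ext \<theta> n (Suc i) = \<theta> (Suc i)"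
    unfolding theta_ext_def by auto
  have b1: "0 < \<theta> i" using bnds assms by auto
  have b2: "\<theta> (Suc i) < 2*pi" using bnds[of "Suc i"] True by auto
  have sub: "{\<theta> i<..<\<theta> (Suc i)} \<subseteq> {0..<4*pi}" using b1 b2 by auto
  show ?thesis unfolding e mod2pi_mem[OF sub] pg_def using True b1 b2 by auto
next
  case False
  then have i: "i = n" using assms by auto
  have e: "theta_ext \<theta> n i = \<theta> n" "theta_ext \<theta> n (Suc i) = \<theta> 1 + 2*pi"
    unfolding theta_ext_def i by auto
  have b1: "0 < \<theta> n" "\<theta> n < 2*pi" "0 < \<theta> 1" "\<theta> 1 < 2*pi" using bnds[of n] bnds[of 1] n1 by auto
  have sub: "{\<theta> n<..<\<theta> 1 + 2*pi} \<subseteq> {0..<4*pi}" using b1 by auto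
  show ?thesis unfolding e mod2pi_mem[OF sub] pg_def using False i b1 by auto
qed

lemma pg_theta:
  assumes "i \<in> {1..n}" "l \<in> {1..n}"
  shows "\<not> pg i (\<theta> l)"
proof (cases "i < n")
  case True
  have "Suc i \<in> {1..n}" using True by auto
  then show ?thesis unfolding pg_def using True mono_lt[OF assms(1) assms(2)]
      mono_lt[OF assms(2) \<open>Suc i \<in> {1..n}\<close>] by auto
next
  case False
  then show ?thesis unfolding pg_def using bnds[OF assms(2)] by auto
qed

lemma pg_disj:
  assumes "i \<in> {1..n}" "i' \<in> {1..n}" "i \<noteq> i'" "pg i t" "pg i' t"
  shows False
proof -
  have w: False if "i < i'" "i \<in> {1..n}" "i' \<in> {1..n}" "pg i t" "pg i' t" for i i'
  proof -
    have "i < n" using that by auto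
    have s: "Suc i \<in> {1..n}" using that by auto
    have "\<theta> (Suc i) \<le> \<theta> i'" using mono_le[OF s that(3)] that by auto
    then show False using that \<open>i < n\<close> bnds[OF that(2)] unfolding pg_def
      by (auto split: if_splits)
  qed
  show False
  proof (cases "i < i'")
    case True then show ?thesis using w assms by blast
  next
    case False then have "i' < i" using assms by auto
    then show ?thesis using w assms by blast
  qed
qed

lemma J_pg:
  assumes "i \<in> {1..n}" "0 \<le> y" "y < 2*pi" "0 < a" "a < 2*pi" "y \<in> Jset \<theta> n i a"
  shows "pg i y"
proof -
  have "y \<in> Iarc y a" using Iarc_mem[OF assms(2-5)] assms by auto
  then show ?thesis using assms(6) G_mem[OF assms(1)] unfolding Jset_def by auto
qed

lemma J_disj:
  assumes "i \<in> {1..n}" "i' \<in> {1..n}" "i \<noteq> i'"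
    "y \<in> Jset \<theta> n i a" "y' \<in> Jset \<theta> n i' a'"
  shows "Iarc y a \<inter> Iarc y' a' = {}"
proof (rule ccontr)
  assume "Iarc y a \<inter> Iarc y' a' \<noteq> {}"
  then obtain t where "t \<in> Iarc y a" "t \<in> Iarc y' a'" by auto
  then have "pg i t" "pg i' t" using assms G_mem[OF assms(1)] G_mem[OF assms(2)]
    unfolding Jset_def by auto
  then show False using pg_disj assms by blast
qed

lemma J_avoid:
  assumes "i \<in> {1..n}" "y \<in> Jset \<theta> n i a" "l \<in> {1..n}"
  shows "\<theta> l \<notin> Iarc y a"
  using assms G_mem[OF assms(1)] pg_theta[OF assms(1) assms(3)] unfolding Jset_def by auto

lemma J_exists:
  assumes "0 \<le> y" "y < 2*pi" "0 < a" "a < 2*pi"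
    and av: "\<forall>l\<in>{1..n}. \<theta> l \<notin> Iarc y a"
  shows "\<exists>i\<in>{1..n}. y \<in> Jset \<theta> n i a"
proof -
  have av': "\<not> (y \<le> \<theta> l \<and> \<theta> l \<le> y + a) \<and> \<not> (y \<le> \<theta> l + 2*pi \<and> \<theta> l + 2*pi \<le> y + a)"
    if "l \<in> {1..n}" for l
    using av that Iarc_mem[OF assms(1-4), of "\<theta> l"] bnds[OF that] by auto
  have one: "(1::nat) \<in> {1..n}" and nn: "n \<in> {1..n}" using n1 by auto
  have suff: "y \<in> Jset \<theta> n i a"
    if i: "i \<in> {1..n}" and c: "\<And>t. 0 \<le> t \<Longrightarrow> t < 2*pi \<Longrightarrow>
       ((y \<le> t \<and> t \<le> y + a) \<or> (y \<le> t + 2*pi \<and> t + 2*pi \<le> y + a)) \<Longrightarrow> pg i t" for i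
    unfolding Jset_def using assms c Iarc_mem[OF assms(1-4)] G_mem[OF i] by auto
  show ?thesis
  proof (cases "y < \<theta> 1")
    case True
    then have ya: "y + a < \<theta> 1" using av'[OF one] by auto
    have "y \<in> Jset \<theta> n n a"
      by (rule suff[OF nn]) (use ya bnds[OF one] in \<open>auto simp: pg_def\<close>)
    then show ?thesis using nn by blast
  next
    case False
    show ?thesis
    proof (cases "\<theta> n < y")
      case True
      then have ya: "y + a < \<theta> 1 + 2*pi" using av'[OF one] assms bnds[OF one] by auto
      have "y \<in> Jset \<theta> n n a"
        by (rule suff[OF nn]) (use ya True in \<open>auto simp: pg_def\<close>)
      then show ?thesis using nn by blast
    next
      case False2: False
      define S where "S = {l\<in>{1..n}. \<theta> l \<le> y}"
      have fS: "finite S" unfolding S_def by auto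
      have "1 \<in> S" unfolding S_def using one False by auto
      then have ne: "S \<noteq> {}" by auto
      define i where "i = Max S"
      have iS: "i \<in> S" unfolding i_def using Max_in[OF fS ne] .
      then have i1: "i \<in> {1..n}" "\<theta> i \<le> y" unfolding S_def by auto
      have ti: "\<theta> i < y" using i1 av'[OF i1(1)] assms by auto
      have "\<theta> n \<noteq> y" using av'[OF nn] assms by auto
      then have "i \<noteq> n" using i1 False2 by auto
      then have "i < n" using i1 by auto
      then have si: "Suc i \<in> {1..n}" by auto
      have "Suc i \<notin> S" using Max_ge[OF fS, of "Suc i"] unfolding i_def by auto
      then have tsi: "y < \<theta> (Suc i)" using si unfolding S_def by auto
      have ya: "y + a < \<theta> (Suc i)" using av'[OF si] tsi by auto
      have "\<theta> (Suc i) < 2*pi" using bnds[OF si] by auto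
      have "y \<in> Jset \<theta> n i a"
        by (rule suff[OF i1(1)])
          (use ya ti \<open>i < n\<close> \<open>\<theta> (Suc i) < 2*pi\<close> in \<open>auto simp: pg_def\<close>)
      then show ?thesis using i1 by blast
    qed
  qed
qed

lemma L_same:
  assumes "i \<in> {1..n}" "pg i u" "pg i v" "u < v"
  shows "\<not> ((\<exists>l\<in>{1..n}. u < \<theta> l \<and> \<theta> l < v) \<and> (\<exists>l\<in>{1..n}. \<theta> l < u \<or> v < \<theta> l))"
proof
  assume h: "(\<exists>l\<in>{1..n}. u < \<theta> l \<and> \<theta> l < v) \<and> (\<exists>l\<in>{1..n}. \<theta> l < u \<or> v < \<theta> l)"
  then obtain l where l: "l \<in> {1..n}" "u < \<theta> l" "\<theta> l < v" by auto
  obtain m where m: "m \<in> {1..n}" "\<theta> m < u \<or> v < \<theta> m" using h by auto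
  show False
  proof (cases "i < n")
    case True
    then have "\<theta> i < \<theta> l" "\<theta> l < \<theta> (Suc i)" using assms l unfolding pg_def by auto
    moreover have "Suc i \<in> {1..n}" using True by auto
    ultimately show False using mono_lt[OF assms(1) l(1)] mono_lt[OF l(1), of "Suc i"] by auto
  next
    case False
    then have pu: "\<theta> n < u \<or> u < \<theta> 1" and pv: "\<theta> n < v \<or> v < \<theta> 1"
      using assms unfolding pg_def by auto
    show False using pu pv l m bnds[OF l(1)] bnds[OF m(1)] assms(4) by auto
  qed
qed

lemma L_diff:
  assumes "i \<in> {1..n}" "i' \<in> {1..n}" "i \<noteq> i'" "pg i u" "pg i' v" "u < v"
  shows "(\<exists>l\<in>{1..n}. u < \<theta> l \<and> \<theta> l < v) \<and> (\<exists>l\<in>{1..n}. \<theta> l < u \<or> v < \<theta> l)"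
proof -
  have one: "(1::nat) \<in> {1..n}" and nn: "n \<in> {1..n}" using n1 by auto
  show ?thesis
  proof (cases "i < n")
    case True
    have si: "Suc i \<in> {1..n}" using True by auto
    have u: "\<theta> i < u" "u < \<theta> (Suc i)" using assms(4) True unfolding pg_def by auto
    have o: "\<theta> 1 < u" using u bnds[OF assms(1)] by auto
    have "u < \<theta> (Suc i) \<and> \<theta> (Suc i) < v"
    proof (cases "i' < n")
      case True2: True
      have v: "\<theta> i' < v" "v < \<theta> (Suc i')" using assms(5) True2 unfolding pg_def by auto
      have si': "Suc i' \<in> {1..n}" using True2 by auto
      have "\<not> i' < i"
      proof
        assume "i' < i"
        then have "\<theta> (Suc i') \<le> \<theta> i" using mono_le[OF si' assms(1)] by auto
        then show False using u v assms(6) by auto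
      qed
      then have "Suc i \<le> i'" using assms(3) by auto
      then have "\<theta> (Suc i) \<le> \<theta> i'" using mono_le[OF si assms(2)] by auto
      then show ?thesis using u v by auto
    next
      case False
      then have v: "\<theta> n < v \<or> v < \<theta> 1" using assms(5) unfolding pg_def by auto
      have "v > \<theta> n" using v o assms(6) by auto
      moreover have "\<theta> (Suc i) \<le> \<theta> n" using bnds[OF si] by auto
      ultimately show ?thesis using u by auto
    qed
    then show ?thesis using si one o by blast
  next
    case False
    then have u: "\<theta> n < u \<or> u < \<theta> 1" using assms(4) unfolding pg_def by auto
    have "i' < n" using False assms by auto
    have si': "Suc i' \<in> {1..n}" using \<open>i' < n\<close> by auto
    have v: "\<theta> i' < v" "v < \<theta> (Suc i')" using assms(5) \<open>i' < n\<close> unfolding pg_def by auto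
    have "\<theta> (Suc i') \<le> \<theta> n" using bnds[OF si'] by auto
    then have u1: "u < \<theta> 1" using u v assms(6) by auto
    have "\<theta> 1 \<le> \<theta> i'" using bnds[OF assms(2)] by auto
    then have "u < \<theta> 1 \<and> \<theta> 1 < v" using u1 v by auto
    moreover have "v < \<theta> n" using v \<open>\<theta> (Suc i') \<le> \<theta> n\<close> by auto
    ultimately show ?thesis using one nn by blast
  qed
qed

end

theorem lemma3:
  fixes \<theta> :: "nat \<Rightarrow> real" and n k :: nat and a y :: "nat \<Rightarrow> real"
  assumes "n \<ge> 1"
    and "strict_mono_on {1..n} \<theta>"
    and "0 < \<theta> 1" and "\<theta> n < 2 * pi"
    and "\<forall>j\<in>{1..k}. 0 < a j \<and> a j < 2 * pi"
    and "\<forall>j\<in>{1..k}. 0 \<le> y j \<and> y j < 2 * pi"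
  shows "y \<in> Sigma_k \<theta> n k a \<longleftrightarrow>
    (\<forall>l\<in>{1..k}. \<forall>j\<in>{1..k}. l < j \<longrightarrow> Iarc (y l) (a l) \<inter> Iarc (y j) (a j) = {}) \<and>
    (\<forall>j\<in>{1..k}. \<forall>l\<in>{1..n}. \<theta> l \<notin> Iarc (y j) (a j)) \<and>
    (\<forall>p\<in>{1..k}. \<forall>q\<in>{1..k}. y p < y q \<longrightarrow>
        \<theta> ` {1..n} \<inter> {y p<..<y q} \<noteq> {} \<and> \<theta> ` {1..n} - {y p..y q} \<noteq> {})"
proof -
  interpret arcs \<theta> n using assms(1-4) by unfold_locales
  have set1: "\<theta> ` {1..n} \<inter> {u<..<v} \<noteq> {} \<longleftrightarrow> (\<exists>l\<in>{1..n}. u < \<theta> l \<and> \<theta> l < v)" for u v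
    by auto
  have set2: "\<theta> ` {1..n} - {u..v} \<noteq> {} \<longleftrightarrow> (\<exists>l\<in>{1..n}. \<theta> l < u \<or> v < \<theta> l)" for u v
  proof
    assume "\<theta> ` {1..n} - {u..v} \<noteq> {}"
    then obtain l where "l \<in> {1..n}" "\<theta> l \<notin> {u..v}" by blast
    then show "\<exists>l\<in>{1..n}. \<theta> l < u \<or> v < \<theta> l" by (auto simp: not_le)
  next
    assume "\<exists>l\<in>{1..n}. \<theta> l < u \<or> v < \<theta> l"
    then show "\<theta> ` {1..n} - {u..v} \<noteq> {}" by auto
  qed
  have self: "y j \<in> Iarc (y j) (a j)" if "j \<in> {1..k}" for j
    using Iarc_mem[of "y j" "a j" "y j"] assms(5,6) that by auto
  show ?thesis (is "_ \<longleftrightarrow> ?R")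
  proof
    assume "y \<in> Sigma_k \<theta> n k a"
    then obtain i where inj: "inj_on i {1..k}" and ir: "i ` {1..k} \<subseteq> {1..n}"
      and J: "\<forall>j\<in>{1..k}. y j \<in> Jset \<theta> n (i j) (a j)"
      unfolding Sigma_k_def by auto
    have C1: "\<forall>l\<in>{1..k}. \<forall>j\<in>{1..k}. l < j \<longrightarrow> Iarc (y l) (a l) \<inter> Iarc (y j) (a j) = {}"
    proof (intro ballI impI)
      fix l j assume "l \<in> {1..k}" "j \<in> {1..k}" "l < j"
      have ne: "i l \<noteq> i j" using inj \<open>l < j\<close> \<open>l \<in> {1..k}\<close> \<open>j \<in> {1..k}\<close> unfolding inj_on_def by fastforce
      show "Iarc (y l) (a l) \<inter> Iarc (y j) (a j) = {}"
      proof (rule J_disj[of "i l" "i j"])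
        show "i l \<in> {1..n}" "i j \<in> {1..n}" using ir \<open>l \<in> {1..k}\<close> \<open>j \<in> {1..k}\<close> by (auto simp: image_subset_iff)
      qed (use ne J \<open>l \<in> {1..k}\<close> \<open>j \<in> {1..k}\<close> in auto)
    qed
    have C2: "\<forall>j\<in>{1..k}. \<forall>l\<in>{1..n}. \<theta> l \<notin> Iarc (y j) (a j)"
      using J_avoid ir J by blast
    have C3: "\<forall>p\<in>{1..k}. \<forall>q\<in>{1..k}. y p < y q \<longrightarrow>
        \<theta> ` {1..n} \<inter> {y p<..<y q} \<noteq> {} \<and> \<theta> ` {1..n} - {y p..y q} \<noteq> {}"
    proof (intro ballI impI)
      fix p q assume pq: "p \<in> {1..k}" "q \<in> {1..k}" "y p < y q"
      then have "p \<noteq> q" by auto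
      then have ne: "i p \<noteq> i q" using inj pq unfolding inj_on_def by blast
      have ipq: "i p \<in> {1..n}" "i q \<in> {1..n}" using ir pq by (auto simp: image_subset_iff)
      have hp: "pg (i p) (y p)"
        by (rule J_pg[OF ipq(1), of "y p" "a p"]) (use J pq assms(5,6) in auto)
      have hq: "pg (i q) (y q)"
        by (rule J_pg[OF ipq(2), of "y q" "a q"]) (use J pq assms(5,6) in auto)
      from L_diff[OF ipq ne hp hq pq(3)]
      show "\<theta> ` {1..n} \<inter> {y p<..<y q} \<noteq> {} \<and> \<theta> ` {1..n} - {y p..y q} \<noteq> {}"
        unfolding set1 set2 .
    qed
    show "?R" using C1 C2 C3 by blast
  next
    assume R: ?R
    have R1: "\<forall>l\<in>{1..k}. \<forall>j\<in>{1..k}. l < j \<longrightarrow> Iarc (y l) (a l) \<inter> Iarc (y j) (a j) = {}"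
      and R2: "\<forall>j\<in>{1..k}. \<forall>l\<in>{1..n}. \<theta> l \<notin> Iarc (y j) (a j)"
      and R3: "\<forall>p\<in>{1..k}. \<forall>q\<in>{1..k}. y p < y q \<longrightarrow>
        \<theta> ` {1..n} \<inter> {y p<..<y q} \<noteq> {} \<and> \<theta> ` {1..n} - {y p..y q} \<noteq> {}"
      using R by simp_all
    have "\<forall>j\<in>{1..k}. \<exists>i\<in>{1..n}. y j \<in> Jset \<theta> n i (a j)"
    proof
      fix j assume j: "j \<in> {1..k}"
      show "\<exists>i\<in>{1..n}. y j \<in> Jset \<theta> n i (a j)"
        by (rule J_exists) (use j R2 assms(5,6) in auto)
    qed
    then obtain f where f: "\<forall>j\<in>{1..k}. f j \<in> {1..n} \<and> y j \<in> Jset \<theta> n (f j) (a j)"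
      by (metis bchoice)
    have pgf: "pg (f j) (y j)" if "j \<in> {1..k}" for j
      by (rule J_pg[of "f j" "y j" "a j"]) (use f assms(5,6) that in auto)
    have inj: "inj_on f {1..k}"
    proof (rule inj_onI, rule ccontr)
      fix p q assume pq: "p \<in> {1..k}" "q \<in> {1..k}" "f p = f q" "p \<noteq> q"
      have "y p \<noteq> y q"
      proof
        assume e: "y p = y q"
        have ne: "Iarc (y p) (a p) \<inter> Iarc (y q) (a q) \<noteq> {}" using self[OF pq(1)] self[OF pq(2)] e by auto
        have "p < q \<or> q < p" using pq by auto
        then show False
        proof
          assume "p < q" then show False using R1 pq ne by blast
        next
          assume "q < p" then show False using R1 pq ne by (metis inf_commute)
        qed
      qed
      then have w: "y p < y q \<or> y q < y p" by auto
      have g: False if h: "p' \<in> {1..k}" "q' \<in> {1..k}" "f p' = f q'" "y p' < y q'" for p' q'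
      proof -
        have "\<theta> ` {1..n} \<inter> {y p'<..<y q'} \<noteq> {} \<and> \<theta> ` {1..n} - {y p'..y q'} \<noteq> {}"
          using R3 h by blast
        then have c: "(\<exists>l\<in>{1..n}. y p' < \<theta> l \<and> \<theta> l < y q') \<and> (\<exists>l\<in>{1..n}. \<theta> l < y p' \<or> y q' < \<theta> l)"
          unfolding set1 set2 .
        have a1: "pg (f p') (y p')" using pgf[OF h(1)] .
        have a2: "pg (f p') (y q')" using pgf[OF h(2)] h(3) by simp
        have a0: "f p' \<in> {1..n}" using f h(1) by blast
        show False using L_same[OF a0 a1 a2 h(4)] c by blast
      qed
      show False using w
      proof
        assume "y p < y q" then show False using g[OF pq(1) pq(2) pq(3)] by blast
      next
        assume "y q < y p" then show False using g[OF pq(2) pq(1) pq(3)[symmetric]] by blast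
      qed
    qed
    show "y \<in> Sigma_k \<theta> n k a" unfolding Sigma_k_def using inj f by blast
  qed
qed

end
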